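(* Let $I=(0,1]$ and let $R$ be a cusp characteristic. Then the one-dimensional Riemannian manifold $(I,dr^2/R^2)$ is uniformly regular.
   Context: A cusp characteristic is a function $R\in C^\infty(I,(0,1])$ with $\int_0^1dt/R(t)=\infty$ and $\sup_{t\in I}|R(t)^{j-1}\partial^jR(t)|\le c(j)$ for all $j\ge1$. A Riemannian manifold (possibly with boundary) is uniformly regular iff it has bounded geometry; equivalently it admits an atlas of normalized charts onto $(-1,1)^m$ or $[0,1)\times(-1,1)^{m-1}$ which is shrinkable, of finite multiplicity, has uniformly $C^k$-bounded transition maps, and in which the metric is uniformly equivalent to the Euclidean one with all derivatives uniformly bounded. *)

theory Defs
  imports "HOL-Analysis.Analysis"
begin

definition smooth_on :: "real set \<Rightarrow> (real \<Rightarrow> real) \<Rightarrow> bool" where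
  "smooth_on S f \<longleftrightarrow>
     (\<exists>T h. open T \<and> S \<subseteq> T \<and> (\<forall>x\<in>S. h x = f x) \<and>
            (\<forall>k. \<forall>x\<in>T. (deriv ^^ k) h differentiable (at x)))"

text \<open>Cusp characteristic on I = (0,1].  The derivative bounds are stated on the interior
  (0,1); since R is smooth up to t = 1 this is equivalent to the bound on all of I.\<close>
definition cusp_characteristic :: "(real \<Rightarrow> real) \<Rightarrow> bool" where
  "cusp_characteristic R \<longleftrightarrow>
     smooth_on {0<..1} R \<and>
     (\<forall>t\<in>{0<..1}. 0 < R t \<and> R t \<le> 1) \<and>
     set_nn_integral lborel {0<..1} (\<lambda>t. ennreal (1 / R t)) = \<infinity> \<and>
     (\<forall>j::nat. j \<ge> 1 \<longrightarrow> (\<exists>c. \<forall>t\<in>{0<..<1}. \<bar>R t ^ (j - 1) * (deriv ^^ j) R t\<bar> \<le> c))"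

text \<open>Model sets of dimension one: b = True is a boundary chart, model [0,1);
  b = False an interior chart, model (-1,1).  shrunk_cube r b is the model scaled by r.\<close>
definition std_cube :: "bool \<Rightarrow> real set" where
  "std_cube b = (if b then {0..<1} else {-1<..<1})"

definition shrunk_cube :: "real \<Rightarrow> bool \<Rightarrow> real set" where
  "shrunk_cube r b = (if b then {0..<r} else {-r<..<r})"

text \<open>Manifold boundary of a one-dimensional manifold M that is a real interval.\<close>
definition mbd :: "real set \<Rightarrow> real set" where
  "mbd M = M - interior M"

text \<open>A chart is represented by (b, psi) where psi : std_cube b \<rightarrow> U is the inverse of
  the chart map phi = inv_into (std_cube b) psi, and U = psi ` std_cube b is the chart patch.\<close>
definition patch :: "bool \<times> (real \<Rightarrow> real) \<Rightarrow> real set" where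
  "patch \<kappa> = snd \<kappa> ` std_cube (fst \<kappa>)"

definition normalized_chart :: "real set \<Rightarrow> bool \<times> (real \<Rightarrow> real) \<Rightarrow> bool" where
  "normalized_chart M \<kappa> \<longleftrightarrow>
     (let b = fst \<kappa>; \<psi> = snd \<kappa>; Q = std_cube b; U = \<psi> ` Q in
       openin (top_of_set M) U \<and> inj_on \<psi> Q \<and>
       smooth_on Q \<psi> \<and> smooth_on U (inv_into Q \<psi>) \<and>
       (b \<longleftrightarrow> U \<inter> mbd M \<noteq> {}) \<and>
       (\<forall>x\<in>Q. \<psi> x \<in> mbd M \<longleftrightarrow> b \<and> x = 0))"

text \<open>Sup-norms are taken over interior points of the
  (relatively open) domains, which by continuity of derivatives up to the boundary gives the
  same suprema.\<close>
definition uniformly_regular :: "real set \<Rightarrow> (real \<Rightarrow> real) \<Rightarrow> bool" where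
  "uniformly_regular M G \<longleftrightarrow>
     (\<exists>A :: (bool \<times> (real \<Rightarrow> real)) set.
        (\<forall>\<kappa>\<in>A. normalized_chart M \<kappa>) \<and>
        (\<exists>r. 0 < r \<and> r < 1 \<and> M \<subseteq> (\<Union>\<kappa>\<in>A. snd \<kappa> ` shrunk_cube r (fst \<kappa>))) \<and>
        (\<exists>N::nat. \<forall>x\<in>M. finite {\<kappa>\<in>A. x \<in> patch \<kappa>} \<and> card {\<kappa>\<in>A. x \<in> patch \<kappa>} \<le> N) \<and>
        (\<forall>k::nat. \<exists>C. \<forall>\<kappa>\<in>A. \<forall>\<eta>\<in>A.
           \<forall>x\<in>interior {y\<in>std_cube (fst \<kappa>). snd \<kappa> y \<in> patch \<eta>}.
             \<bar>(deriv ^^ k) (inv_into (std_cube (fst \<eta>)) (snd \<eta>) \<circ> snd \<kappa>) x\<bar> \<le> C) \<and>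
        (\<exists>c\<ge>1. \<forall>\<kappa>\<in>A. \<forall>x\<in>interior (std_cube (fst \<kappa>)).
           1 / c \<le> G (snd \<kappa> x) * (deriv (snd \<kappa>) x)\<^sup>2 \<and>
           G (snd \<kappa> x) * (deriv (snd \<kappa>) x)\<^sup>2 \<le> c) \<and>
        (\<forall>k::nat. \<exists>C. \<forall>\<kappa>\<in>A. \<forall>x\<in>interior (std_cube (fst \<kappa>)).
           \<bar>(deriv ^^ k) (\<lambda>y. G (snd \<kappa> y) * (deriv (snd \<kappa>) y)\<^sup>2) x\<bar> \<le> C))"

end

theory Submission
  imports Defs
begin


definition Cinf :: "real set \<Rightarrow> (real \<Rightarrow> real) \<Rightarrow> bool" where
  "Cinf T f \<longleftrightarrow> (\<forall>k. \<forall>x\<in>T. (deriv ^^ k) f differentiable (at x))"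

lemma deriv_local:
  assumes "open T" "\<forall>x\<in>T. f x = g x" "x \<in> T"
  shows "deriv f x = deriv g x"
proof (rule deriv_cong_ev)
  show "eventually (\<lambda>x. f x = g x) (nhds x)"
    unfolding eventually_nhds using assms by blast
qed simp

lemma funpow_local:
  assumes "open T" "\<forall>x\<in>T. f x = g x"
  shows "\<forall>x\<in>T. (deriv ^^ k) f x = (deriv ^^ k) g x"
proof (induction k)
  case 0 then show ?case using assms by simp
next
  case (Suc k) then show ?case using deriv_local[OF assms(1) Suc] by simp
qed

lemma differentiable_local:
  fixes f g :: "real \<Rightarrow> real"
  assumes "open T" "\<forall>x\<in>T. f x = g x" "x \<in> T" "g differentiable (at x)"
  shows "f differentiable (at x)"
proof -
  from assms(4) obtain D where "(g has_field_derivative D) (at x)"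
    using real_differentiable_def by blast
  then have "(f has_field_derivative D) (at x)"
    by (rule has_field_derivative_transform_within_open[OF _ assms(1,3)]) (use assms(2) in auto)
  then show ?thesis using real_differentiable_def by blast
qed

lemma Cinf_local:
  assumes "open T" "\<forall>x\<in>T. f x = g x" "Cinf T g"
  shows "Cinf T f"
  unfolding Cinf_def
proof (intro allI ballI)
  fix k x assume x: "x \<in> T"
  show "(deriv ^^ k) f differentiable (at x)"
    by (rule differentiable_local[OF assms(1) funpow_local[OF assms(1,2)] x])
       (use assms(3) x in \<open>auto simp: Cinf_def\<close>)
qed

lemma Cinf_coinduct:
  fixes f :: "real \<Rightarrow> real"
  assumes T: "open T"
    and step: "\<And>f. P f \<Longrightarrow> (\<forall>x\<in>T. f differentiable (at x)) \<and> (\<exists>g. P g \<and> (\<forall>x\<in>T. deriv f x = g x))"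
    and P: "P f"
  shows "Cinf T f"
proof -
  have "\<forall>f. P f \<longrightarrow> (\<exists>g. P g \<and> (\<forall>x\<in>T. (deriv ^^ k) f x = g x))" for k
  proof (induction k)
    case 0 then show ?case by auto
  next
    case (Suc k)
    show ?case
    proof (intro allI impI)
      fix f assume "P f"
      then obtain g where g: "P g" "\<forall>x\<in>T. deriv f x = g x" using step by blast
      then obtain g2 where g2: "P g2" "\<forall>x\<in>T. (deriv ^^ k) g x = g2 x" using Suc by blast
      have "\<forall>x\<in>T. (deriv ^^ k) (deriv f) x = (deriv ^^ k) g x"
        by (rule funpow_local[OF T g(2)])
      then have "\<forall>x\<in>T. (deriv ^^ Suc k) f x = g2 x"
        using g2 by (simp add: funpow_Suc_right del: funpow.simps)
      then show "\<exists>g. P g \<and> (\<forall>x\<in>T. (deriv ^^ Suc k) f x = g x)" using g2 by blast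
    qed
  qed
  note H = this
  show ?thesis unfolding Cinf_def
  proof (intro allI ballI)
    fix k x assume x: "x \<in> T"
    obtain g where g: "P g" "\<forall>x\<in>T. (deriv ^^ k) f x = g x" using H P by blast
    have "g differentiable (at x)" using step[OF g(1)] x by blast
    then show "(deriv ^^ k) f differentiable (at x)"
      by (rule differentiable_local[OF T g(2) x])
  qed
qed

lemma Cinf_diff: "Cinf T f \<Longrightarrow> x \<in> T \<Longrightarrow> f differentiable (at x)"
  unfolding Cinf_def by (metis funpow_0)

lemma Cinf_deriv: "Cinf T f \<Longrightarrow> Cinf T (deriv f)"
  unfolding Cinf_def by (metis funpow_Suc_right o_apply)

lemma Cinf_DERIV: "Cinf T f \<Longrightarrow> x \<in> T \<Longrightarrow> (f has_field_derivative deriv f x) (at x)"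
  using Cinf_diff DERIV_deriv_iff_real_differentiable by blast

lemma Cinf_from_deriv:
  assumes T: "open T" and d: "\<forall>x\<in>T. f differentiable (at x)" and e: "\<forall>x\<in>T. deriv f x = g x" and g: "Cinf T g"
  shows "Cinf T f"
proof (rule Cinf_coinduct[where P="\<lambda>u. u = f \<or> Cinf T u", OF T])
  fix u assume "u = f \<or> Cinf T u"
  then show "(\<forall>x\<in>T. u differentiable (at x)) \<and> (\<exists>g. (g = f \<or> Cinf T g) \<and> (\<forall>x\<in>T. deriv u x = g x))"
  proof
    assume "u = f" then show ?thesis using d e g by blast
  next
    assume "Cinf T u" then show ?thesis using Cinf_diff Cinf_deriv by blast
  qed
qed simp

lemma Cinf_const: assumes "open T" shows "Cinf T (\<lambda>_. c)"
proof (rule Cinf_coinduct[where P="\<lambda>u. u = (\<lambda>_. c) \<or> u = (\<lambda>_. 0)", OF assms])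
  fix f :: "real \<Rightarrow> real" assume "f = (\<lambda>_. c) \<or> f = (\<lambda>_. 0)"
  then show "(\<forall>x\<in>T. f differentiable at x) \<and> (\<exists>g. (g = (\<lambda>_. c) \<or> g = (\<lambda>_. 0)) \<and> (\<forall>x\<in>T. deriv f x = g x))"
  proof
    assume f: "f = (\<lambda>_. c)"
    have "\<forall>x\<in>T. deriv f x = 0" unfolding f by simp
    moreover have "\<forall>x\<in>T. f differentiable at x" unfolding f by simp
    ultimately show ?thesis by blast
  next
    assume f: "f = (\<lambda>_. 0)"
    have "\<forall>x\<in>T. deriv f x = 0" unfolding f by simp
    moreover have "\<forall>x\<in>T. f differentiable at x" unfolding f by simp
    ultimately show ?thesis by blast
  qed
qed simp

lemma Cinf_affine: assumes "open T" shows "Cinf T (\<lambda>x. a * x + b)"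
proof (rule Cinf_from_deriv[OF assms _ _ Cinf_const[OF assms, of a]])
  have "((\<lambda>x. a * x + b) has_field_derivative a) (at x)" for x
    by (auto intro!: derivative_eq_intros)
  then show "\<forall>x\<in>T. (\<lambda>x. a * x + b) differentiable at x" "\<forall>x\<in>T. deriv (\<lambda>x. a * x + b) x = a"
    using DERIV_imp_deriv real_differentiable_def by (metis, metis)
qed

definition SP :: "((real \<Rightarrow> real) \<times> (real \<Rightarrow> real)) list \<Rightarrow> real \<Rightarrow> real" where
  "SP ps x = (\<Sum>p\<leftarrow>ps. fst p x * snd p x)"

lemma SP_DERIV:
  assumes "\<forall>p\<in>set ps. Cinf T (fst p) \<and> Cinf T (snd p)" "x \<in> T"
  shows "(SP ps has_field_derivative
           SP (map (\<lambda>p. (deriv (fst p), snd p)) ps @ map (\<lambda>p. (fst p, deriv (snd p))) ps) x) (at x)"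
  using assms(1)
proof (induction ps)
  case Nil then show ?case by (simp add: SP_def)
next
  case (Cons p ps)
  have f: "(fst p has_field_derivative deriv (fst p) x) (at x)"
    using Cons.prems assms(2) Cinf_DERIV by auto
  have g: "(snd p has_field_derivative deriv (snd p) x) (at x)"
    using Cons.prems assms(2) Cinf_DERIV by auto
  have r: "(SP ps has_field_derivative
           SP (map (\<lambda>p. (deriv (fst p), snd p)) ps @ map (\<lambda>p. (fst p, deriv (snd p))) ps) x) (at x)"
    using Cons by auto
  have e: "SP (p # ps) = (\<lambda>x. fst p x * snd p x + SP ps x)"
    by (simp add: SP_def fun_eq_iff)
  show ?case unfolding e
    using DERIV_add[OF DERIV_mult[OF f g] r]
    by (simp add: SP_def algebra_simps)
qed

lemma Cinf_SP:
  assumes T: "open T" and P: "\<forall>p\<in>set ps. Cinf T (fst p) \<and> Cinf T (snd p)"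
  shows "Cinf T (SP ps)"
proof (rule Cinf_coinduct[where P="\<lambda>h. \<exists>ps. (\<forall>p\<in>set ps. Cinf T (fst p) \<and> Cinf T (snd p)) \<and> (\<forall>x\<in>T. h x = SP ps x)", OF T])
  fix h assume "\<exists>ps. (\<forall>p\<in>set ps. Cinf T (fst p) \<and> Cinf T (snd p)) \<and> (\<forall>x\<in>T. h x = SP ps x)"
  then obtain ps where ps: "\<forall>p\<in>set ps. Cinf T (fst p) \<and> Cinf T (snd p)" "\<forall>x\<in>T. h x = SP ps x" by blast
  define ps' where "ps' = map (\<lambda>p. (deriv (fst p), snd p)) ps @ map (\<lambda>p. (fst p, deriv (snd p))) ps"
  have ps': "\<forall>p\<in>set ps'. Cinf T (fst p) \<and> Cinf T (snd p)"
    using ps(1) Cinf_deriv unfolding ps'_def by auto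
  have D: "(h has_field_derivative SP ps' x) (at x)" if x: "x \<in> T" for x
  proof -
    have "(SP ps has_field_derivative SP ps' x) (at x)" unfolding ps'_def by (rule SP_DERIV[OF ps(1) x])
    then show ?thesis
      by (rule has_field_derivative_transform_within_open[OF _ T x]) (use ps(2) in auto)
  qed
  have "\<forall>x\<in>T. h differentiable (at x)" using D real_differentiable_def by blast
  moreover have "\<forall>x\<in>T. deriv h x = SP ps' x" using D DERIV_imp_deriv by blast
  ultimately show "(\<forall>x\<in>T. h differentiable (at x)) \<and>
     (\<exists>g. (\<exists>ps. (\<forall>p\<in>set ps. Cinf T (fst p) \<and> Cinf T (snd p)) \<and> (\<forall>x\<in>T. g x = SP ps x)) \<and> (\<forall>x\<in>T. deriv h x = g x))"
    using ps' by blast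
next
  show "\<exists>psa. (\<forall>p\<in>set psa. Cinf T (fst p) \<and> Cinf T (snd p)) \<and> (\<forall>x\<in>T. SP ps x = SP psa x)"
    using P by blast
qed

lemma Cinf_mult:
  assumes "open T" "Cinf T f" "Cinf T g"
  shows "Cinf T (\<lambda>x. f x * g x)"
proof -
  have "Cinf T (SP [(f,g)])" by (rule Cinf_SP) (use assms in auto)
  moreover have "SP [(f,g)] = (\<lambda>x. f x * g x)" by (simp add: SP_def fun_eq_iff)
  ultimately show ?thesis by simp
qed

lemma Cinf_add:
  assumes "open T" "Cinf T f" "Cinf T g"
  shows "Cinf T (\<lambda>x. f x + g x)"
proof -
  have "Cinf T (SP [(f,\<lambda>_. 1), (\<lambda>_. 1, g)])" by (rule Cinf_SP) (use assms Cinf_const in auto)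
  moreover have "SP [(f,\<lambda>_. 1), (\<lambda>_. 1, g)] = (\<lambda>x. f x + g x)" by (simp add: SP_def fun_eq_iff)
  ultimately show ?thesis by simp
qed

lemma Cinf_cmult:
  assumes "open T" "Cinf T f"
  shows "Cinf T (\<lambda>x. c * f x)"
  using Cinf_mult[OF assms(1) Cinf_const[OF assms(1)] assms(2)] .

lemma Cinf_diff2:
  assumes "open T" "Cinf T f" "Cinf T g"
  shows "Cinf T (\<lambda>x. f x - g x)"
  using Cinf_add[OF assms(1,2) Cinf_cmult[OF assms(1,3), of "-1"]] by simp

lemma Cinf_comp:
  assumes T: "open T" and T': "open T'" and FT: "\<forall>x\<in>T. F x \<in> T'"
    and FD: "\<forall>x\<in>T. (F has_field_derivative g (F x)) (at x)"
    and g: "Cinf T' g" and a: "Cinf T' a"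
  shows "Cinf T (\<lambda>x. a (F x))"
proof (rule Cinf_coinduct[where P="\<lambda>u. \<exists>a. Cinf T' a \<and> (\<forall>x\<in>T. u x = a (F x))", OF T])
  fix u assume "\<exists>a. Cinf T' a \<and> (\<forall>x\<in>T. u x = a (F x))"
  then obtain b where b: "Cinf T' b" "\<forall>x\<in>T. u x = b (F x)" by blast
  have D: "(u has_field_derivative (\<lambda>y. deriv b y * g y) (F x)) (at x)" if x: "x \<in> T" for x
  proof -
    have "((\<lambda>x. b (F x)) has_field_derivative deriv b (F x) * g (F x)) (at x)"
      using DERIV_chain2[OF Cinf_DERIV[OF b(1)] FD[rule_format, OF x]] FT x by blast
    then show ?thesis
      by (rule has_field_derivative_transform_within_open[OF _ T x]) (use b(2) in auto)
  qed
  have "Cinf T' (\<lambda>y. deriv b y * g y)" by (rule Cinf_mult[OF T' Cinf_deriv[OF b(1)] g])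
  moreover have "\<forall>x\<in>T. u differentiable (at x)" using D real_differentiable_def by blast
  moreover have "\<forall>x\<in>T. deriv u x = (\<lambda>y. deriv b y * g y) (F x)" using D DERIV_imp_deriv by blast
  ultimately show "(\<forall>x\<in>T. u differentiable (at x)) \<and>
     (\<exists>ga. (\<exists>a. Cinf T' a \<and> (\<forall>x\<in>T. ga x = a (F x))) \<and> (\<forall>x\<in>T. deriv u x = ga x))"
    by blast
qed (use a in blast)

lemma Cinf_shift:
  assumes T: "open T" and T': "open T'" and FT: "\<forall>y\<in>T. c + y \<in> T'" and a: "Cinf T' a"
  shows "Cinf T (\<lambda>y. a (c + y))"
proof (rule Cinf_comp[OF T T' FT _ Cinf_const[OF T', of 1] a])
  show "\<forall>x\<in>T. ((+) c has_real_derivative 1) (at x)"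
    by (auto intro!: derivative_eq_intros)
qed

lemma Cinf_inverse:
  assumes T: "open T" and h: "Cinf T h" and nz: "\<forall>x\<in>T. h x \<noteq> 0"
  shows "Cinf T (\<lambda>x. 1 / h x)"
proof (rule Cinf_coinduct[where P="\<lambda>u. \<exists>a n. Cinf T a \<and> (\<forall>x\<in>T. u x = a x / h x ^ Suc n)", OF T])
  fix u assume "\<exists>a n. Cinf T a \<and> (\<forall>x\<in>T. u x = a x / h x ^ Suc n)"
  then obtain a n where a: "Cinf T a" "\<forall>x\<in>T. u x = a x / h x ^ Suc n" by blast
  define b where "b = (\<lambda>x. deriv a x * h x - of_nat (Suc n) * (a x * deriv h x))"
  have D: "(u has_field_derivative b x / h x ^ Suc (Suc n)) (at x)" if x: "x \<in> T" for x
  proof -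
    have hx: "h x \<noteq> 0" using nz x by blast
    have "((\<lambda>x. a x / h x ^ Suc n) has_field_derivative
         (deriv a x * h x ^ Suc n - of_nat (Suc n) * (deriv h x * h x ^ n) * a x) / (h x ^ Suc n * h x ^ Suc n)) (at x)"
      using DERIV_quotient[OF Cinf_DERIV[OF a(1) x] DERIV_power[OF Cinf_DERIV[OF h x], of "Suc n"]] hx
      by simp
    moreover have "(deriv a x * h x ^ Suc n - of_nat (Suc n) * (deriv h x * h x ^ n) * a x) / (h x ^ Suc n * h x ^ Suc n)
       = b x / h x ^ Suc (Suc n)"
      using hx unfolding b_def by (simp add: field_simps)
    ultimately have "((\<lambda>x. a x / h x ^ Suc n) has_field_derivative b x / h x ^ Suc (Suc n)) (at x)" by simp
    then show ?thesis
      by (rule has_field_derivative_transform_within_open[OF _ T x]) (use a(2) in auto)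
  qed
  have "Cinf T b" unfolding b_def
    by (intro Cinf_diff2 Cinf_mult Cinf_cmult Cinf_deriv a h T)
  moreover have "\<forall>x\<in>T. u differentiable (at x)" using D real_differentiable_def by blast
  moreover have "\<forall>x\<in>T. deriv u x = b x / h x ^ Suc (Suc n)" using D DERIV_imp_deriv by blast
  ultimately show "(\<forall>x\<in>T. u differentiable (at x)) \<and>
     (\<exists>g. (\<exists>a n. Cinf T a \<and> (\<forall>x\<in>T. g x = a x / h x ^ Suc n)) \<and> (\<forall>x\<in>T. deriv u x = g x))"
    by blast
next
  show "\<exists>a n. Cinf T a \<and> (\<forall>x\<in>T. 1 / h x = a x / h x ^ Suc n)"
    by (rule exI[of _ "\<lambda>_. 1"], rule exI[of _ 0]) (simp add: Cinf_const T)
qed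




locale cs =
  fixes R h :: "real \<Rightarrow> real" and b :: real
  assumes b1: "1 < b" and hC: "Cinf {0<..<b} h" and hpos: "\<forall>x\<in>{0<..<b}. 0 < h x"
    and Rh: "\<forall>x\<in>{0<..1}. R x = h x"
    and infint: "set_nn_integral lborel {0<..1} (\<lambda>t. ennreal (1 / R t)) = \<infinity>"
begin

definition fI :: "real \<Rightarrow> real" where "fI x = 1 / h x"
definition S :: "real \<Rightarrow> real" where
  "S x = (if x \<le> 1 then integral {x..1} fI else - integral {1..x} fI)"

lemma isCont_h: "x \<in> {0<..<b} \<Longrightarrow> isCont h x"
  by (rule differentiable_imp_continuous_within, rule Cinf_diff[OF hC])

lemma isCont_fI: assumes "x \<in> {0<..<b}" shows "isCont fI x"
proof -
  have "h x \<noteq> 0" using hpos assms by force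
  then show ?thesis unfolding fI_def using isCont_h[OF assms]
    by (intro continuous_intros) auto
qed

lemma cont_fI: "0 < a \<Longrightarrow> c < b \<Longrightarrow> continuous_on {a..c} fI"
  by (intro continuous_at_imp_continuous_on ballI isCont_fI) auto

lemma fI_pos: "x \<in> {0<..<b} \<Longrightarrow> 0 < fI x"
  unfolding fI_def using hpos by auto

lemma S_DERIV:
  assumes x: "x \<in> {0<..<b}"
  shows "(S has_real_derivative (- fI x)) (at x)"
proof -
  define a where "a = min (x/2) (1/2)"
  define c where "c = (max x 1 + b) / 2"
  have a: "0 < a" "a < x" "a < 1" using x unfolding a_def by auto
  have c: "c < b" "x < c" "1 < c" using x b1 unfolding c_def by auto
  have cf: "continuous_on {a..c} fI" by (rule cont_fI) (use a c in auto)
  have int: "fI integrable_on {a..c}" by (rule integrable_continuous_real[OF cf])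
  have eq: "S y = integral {a..1} fI - integral {a..y} fI" if y: "y \<in> {a<..<c}" for y
  proof (cases "y \<le> 1")
    case True
    have I: "fI integrable_on {a..1}" by (rule integrable_on_subinterval[OF int]) (use c in auto)
    have "integral {a..y} fI + integral {y..1} fI = integral {a..1} fI"
      by (rule Henstock_Kurzweil_Integration.integral_combine[where a=a and c=y and b=1, OF _ _ I]) (use y True in auto)
    then show ?thesis using True unfolding S_def by simp
  next
    case False
    have I: "fI integrable_on {a..y}" by (rule integrable_on_subinterval[OF int]) (use y in auto)
    have "integral {a..1} fI + integral {1..y} fI = integral {a..y} fI"
      by (rule Henstock_Kurzweil_Integration.integral_combine[where a=a and c=1 and b=y, OF _ _ I]) (use y False a in auto)
    then show ?thesis using False unfolding S_def by simp
  qed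
  have "((\<lambda>y. integral {a..y} fI) has_real_derivative fI x) (at x within {a..c})"
    by (rule integral_has_real_derivative[OF cf]) (use a c in auto)
  moreover have "at x within {a..c} = at x"
    by (rule at_within_interior) (use a c in auto)
  ultimately have "((\<lambda>y. integral {a..y} fI) has_real_derivative fI x) (at x)" by simp
  then have "((\<lambda>y. integral {a..1} fI - integral {a..y} fI) has_real_derivative (- fI x)) (at x)"
    by (auto intro!: derivative_eq_intros)
  then show ?thesis
    by (rule has_field_derivative_transform_within_open[where S="{a<..<c}"]) (use a c eq in auto)
qed

lemma S_cont: "x \<in> {0<..<b} \<Longrightarrow> isCont S x"
  by (rule DERIV_isCont, rule S_DERIV)

lemma S_contOn: "0 < a \<Longrightarrow> c < b \<Longrightarrow> continuous_on {a..c} S"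
  by (intro continuous_at_imp_continuous_on ballI S_cont) auto

lemma S_strict: assumes "0 < x" "x < y" "y < b" shows "S y < S x"
proof (rule DERIV_neg_imp_decreasing[OF assms(2)])
  fix z assume "x \<le> z" "z \<le> y"
  then have z: "z \<in> {0<..<b}" using assms by auto
  show "\<exists>D. (S has_real_derivative D) (at z) \<and> D < 0"
    using S_DERIV[OF z] fI_pos[OF z] by auto
qed

lemma S_1: "S 1 = 0" unfolding S_def by simp

lemma S_inj: "inj_on S {0<..<b}"
proof (rule inj_onI)
  fix x y assume x: "x \<in> {0<..<b}" and y: "y \<in> {0<..<b}" and e: "S x = S y"
  show "x = y"
  proof (rule ccontr)
    assume "x \<noteq> y"
    then have "x < y \<or> y < x" by linarith
    then show False
    proof
      assume "x < y" then have "S y < S x" using S_strict x y by auto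
      then show False using e by simp
    next
      assume "y < x" then have "S x < S y" using S_strict x y by auto
      then show False using e by simp
    qed
  qed
qed

lemma S_unbounded: "\<exists>r\<in>{0<..1}. B < S r"
proof (rule ccontr)
  assume "\<not> ?thesis"
  then have SB: "\<forall>r\<in>{0<..1}. S r \<le> B" by auto
  define an :: "nat \<Rightarrow> real" where "an n = 1 / real (Suc (Suc n))" for n :: nat
  have an: "0 < an n" "an n < 1" for n unfolding an_def by (auto simp: field_simps)
  have andec: "an m \<le> an n" if "n \<le> m" for n m :: nat unfolding an_def using that
    by (auto simp: field_simps)
  define g :: "nat \<Rightarrow> real \<Rightarrow> ennreal" where "g n x = ennreal (indicator {an n..1} x * fI x)" for n x
  have ginc: "incseq g"
    unfolding incseq_def le_fun_def g_def
  proof (intro allI impI)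
    fix n m :: nat and x :: real assume nm: "n \<le> m"
    show "ennreal (indicator {an n..1} x * fI x) \<le> ennreal (indicator {an m..1} x * fI x)"
    proof (cases "x \<in> {an n..1}")
      case True
      then have "x \<in> {an m..1}" using andec[OF nm] by auto
      then show ?thesis using True by simp
    next
      case False then show ?thesis by simp
    qed
  qed
  have gmeas: "g n \<in> borel_measurable lborel" for n
  proof -
    have "(\<lambda>x. indicator {an n..1} x *\<^sub>R fI x) \<in> borel_measurable borel"
      by (rule borel_measurable_continuous_on_indicator) (use cont_fI an b1 in auto)
    then show ?thesis unfolding g_def by simp
  qed
  have gint: "integral\<^sup>N lborel (g n) = ennreal (S (an n))" for n
  proof -
    have "(fI has_integral integral {an n..1} fI) {an n..1}"
      by (rule integrable_integral, rule integrable_continuous_real, rule cont_fI) (use an b1 in auto)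
    moreover have "0 \<le> fI x" if "x \<in> {an n..1}" for x
    proof -
      have "x \<in> {0<..<b}" using that an[of n] b1 by auto
      then show ?thesis using fI_pos less_imp_le by blast
    qed
    ultimately have "integral\<^sup>N lborel (g n) = ennreal (integral {an n..1} fI)"
      unfolding g_def using nn_integral_has_integral_lebesgue by blast
    then show ?thesis unfolding S_def using an by simp
  qed
  have "set_nn_integral lborel {0<..1} (\<lambda>t. ennreal (1 / R t)) \<le> integral\<^sup>N lborel (\<lambda>x. SUP n. g n x)"
  proof (rule nn_integral_mono)
    fix x
    show "ennreal (1 / R x) * indicator {0<..1} x \<le> (SUP n. g n x)"
    proof (cases "x \<in> {0<..1}")
      case True
      obtain n where n: "inverse (real (Suc n)) < x" using True reals_Archimedean by auto
      have "an n \<le> inverse (real (Suc n))" unfolding an_def by (auto simp: field_simps)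
      then have "x \<in> {an n..1}" using n True by auto
      moreover have "R x = h x" using Rh True by blast
      ultimately have "g n x = ennreal (1 / R x) * indicator {0<..1} x"
        unfolding g_def fI_def indicator_def using True by simp
      moreover have "g n x \<le> (SUP n. g n x)" by (rule SUP_upper) simp
      ultimately show ?thesis by simp
    next
      case False then show ?thesis by simp
    qed
  qed
  also have "\<dots> = (SUP n. integral\<^sup>N lborel (g n))"
    by (rule nn_integral_monotone_convergence_SUP[OF ginc gmeas])
  also have "\<dots> \<le> ennreal B"
  proof (rule SUP_least)
    fix n show "integral\<^sup>N lborel (g n) \<le> ennreal B"
    proof -
      have "an n \<in> {0<..1}" using an[of n] by auto
      then have "S (an n) \<le> B" using SB by blast
      then show ?thesis unfolding gint by (rule ennreal_leI)
    qed
  qed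
  finally have "set_nn_integral lborel {0<..1} (\<lambda>t. ennreal (1 / R t)) \<le> ennreal B" .
  then have "\<infinity> \<le> ennreal B" unfolding infint .
  then show False by (simp add: top_unique)
qed

end



context cs begin

definition b2 :: real where "b2 = (1 + b) / 2"
definition F :: "real \<Rightarrow> real" where "F y = inv_into {0<..<b} S y"

lemma b2: "1 < b2" "b2 < b" unfolding b2_def using b1 by auto

lemma S_b2: "S b2 < 0" using S_strict[of 1 b2] b2 S_1 by auto

lemma S_surj: assumes y: "S b2 < y" shows "\<exists>r\<in>{0<..<b2}. S r = y"
proof (cases "0 \<le> y")
  case True
  obtain r0 where r0: "r0 \<in> {0<..1}" "y < S r0" using S_unbounded by blast
  have "\<exists>x\<ge>r0. x \<le> 1 \<and> S x = y"
    by (rule IVT2') (use r0 True S_1 S_contOn b1 in auto)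
  then obtain r where "r0 \<le> r" "r \<le> 1" "S r = y" by blast
  then show ?thesis using r0 b2 by (intro bexI[of _ r]) auto
next
  case False
  have "\<exists>x\<ge>1. x \<le> b2 \<and> S x = y"
    by (rule IVT2') (use y False S_1 S_contOn b2 in auto)
  then obtain r where r: "1 \<le> r" "r \<le> b2" "S r = y" by blast
  then have "r \<noteq> b2" using y by auto
  then show ?thesis using r by (intro bexI[of _ r]) auto
qed

lemma F_S: "r \<in> {0<..<b} \<Longrightarrow> F (S r) = r"
  unfolding F_def by (rule inv_into_f_f[OF S_inj])

lemma F_props: assumes "S b2 < y" shows "F y \<in> {0<..<b2}" "S (F y) = y"
proof -
  obtain r where r: "r \<in> {0<..<b2}" "S r = y" using S_surj[OF assms] by blast
  have "r \<in> {0<..<b}" using r b2 by auto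
  then have "F y = r" using F_S r(2) by blast
  then show "F y \<in> {0<..<b2}" "S (F y) = y" using r by auto
qed

lemma F_in: "S b2 < y \<Longrightarrow> F y \<in> {0<..<b}"
  using F_props(1) b2 by fastforce

lemma F_DERIV:
  assumes y: "S b2 < y"
  shows "(F has_real_derivative - h (F y)) (at y)"
proof -
  define x where "x = F y"
  have x: "x \<in> {0<..<b}" unfolding x_def by (rule F_in[OF y])
  have Sx: "S x = y" unfolding x_def by (rule F_props(2)[OF y])
  define d where "d = min x (b - x) / 2"
  have d: "0 < d" using x unfolding d_def by auto
  have zin: "z \<in> {0<..<b}" if "\<bar>z - x\<bar> \<le> d" for z
  proof -
    have "\<bar>z - x\<bar> < x" "\<bar>z - x\<bar> < b - x" using that x unfolding d_def by auto
    then show ?thesis by (auto simp: abs_less_iff)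
  qed
  have "isCont F (S x)"
  proof (rule isCont_inverse_function[where f=S and g=F and x=x, OF d])
    fix z assume "\<bar>z - x\<bar> \<le> d"
    then have z: "z \<in> {0<..<b}" by (rule zin)
    show "F (S z) = z" by (rule F_S[OF z])
  next
    fix z assume "\<bar>z - x\<bar> \<le> d"
    then have z: "z \<in> {0<..<b}" by (rule zin)
    show "isCont S z" by (rule S_cont[OF z])
  qed
  then have cont: "isCont F y" using Sx by simp
  have D: "(S has_real_derivative (- fI x)) (at (F y))" using S_DERIV[OF x] unfolding x_def .
  have nz: "- fI x \<noteq> 0" using fI_pos[OF x] by simp
  have "(F has_real_derivative inverse (- fI x)) (at y)"
  proof (rule DERIV_inverse_function[OF D nz _ _ _ cont, where a="S b2" and b="y+1"])
    fix z assume "S b2 < z" "z < y + 1"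
    then show "S (F z) = z" using F_props(2) by blast
  qed (use y in auto)
  moreover have "inverse (- fI x) = - h (F y)"
    unfolding fI_def x_def using hpos F_in[OF y] by (simp add: field_simps)
  ultimately show ?thesis by simp
qed

lemma Cinf_F: "Cinf {S b2<..} F"
proof -
  have T': "open {0<..<(b::real)}" by simp
  have g: "Cinf {0<..<b} (\<lambda>u. (-1) * h u)" by (rule Cinf_cmult[OF T' hC])
  have "Cinf {S b2<..} (\<lambda>x. (\<lambda>u. 1 * u + 0) (F x))"
  proof (rule Cinf_comp[OF _ T' _ _ g Cinf_affine[OF T']])
    show "\<forall>x\<in>{S b2<..}. F x \<in> {0<..<b}" using F_in by auto
    show "\<forall>x\<in>{S b2<..}. (F has_real_derivative (-1) * h (F x)) (at x)"
      using F_DERIV by auto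
  qed simp
  then show ?thesis by simp
qed

lemma Cinf_S: "Cinf {0<..<b} S"
proof (rule Cinf_from_deriv[where g="\<lambda>x. (-1) * (1 / h x)"])
  show "open {0<..<b}" by simp
  show "\<forall>x\<in>{0<..<b}. S differentiable at x"
    using S_DERIV real_differentiable_def by blast
  show "\<forall>x\<in>{0<..<b}. deriv S x = (-1) * (1 / h x)"
    using S_DERIV DERIV_imp_deriv unfolding fI_def by fastforce
  show "Cinf {0<..<b} (\<lambda>x. (-1) * (1 / h x))"
    by (rule Cinf_cmult, simp, rule Cinf_inverse[OF _ hC]) (use hpos in auto)
qed

lemma F_strict: assumes "S b2 < y1" "y1 < y2" shows "F y2 < F y1"
proof (rule ccontr)
  assume "\<not> F y2 < F y1"
  then have "F y1 < F y2 \<or> F y1 = F y2" by linarith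
  then show False
  proof
    assume l: "F y1 < F y2"
    have "S (F y2) < S (F y1)"
      by (rule S_strict) (use l F_in[of y1] F_in[of y2] assms in auto)
    then show False using F_props(2)[of y1] F_props(2)[of y2] assms by auto
  next
    assume "F y1 = F y2"
    then show False using F_props(2)[of y1] F_props(2)[of y2] assms by auto
  qed
qed

lemma F_0: "F 0 = 1" using F_S[of 1] S_1 b1 by auto

lemma F_inj: "S b2 < y1 \<Longrightarrow> S b2 < y2 \<Longrightarrow> F y1 = F y2 \<Longrightarrow> y1 = y2"
  using F_props(2) by metis

lemma F_pos_range: assumes "0 \<le> y" shows "F y \<in> {0<..1}"
proof -
  have "F y \<le> 1"
  proof (cases "y = 0")
    case True then show ?thesis using F_0 by simp
  next
    case False then have "F y < F 0" using F_strict[of 0 y] S_b2 assms by auto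
    then show ?thesis using F_0 by simp
  qed
  moreover have "0 < F y" using F_in[of y] S_b2 assms by auto
  ultimately show ?thesis by auto
qed

lemma F_lt1: "0 < y \<Longrightarrow> F y < 1"
  using F_strict[of 0 y] S_b2 F_0 by auto

lemma S_nonneg: assumes "r \<in> {0<..1}" shows "0 \<le> S r"
proof (cases "r = 1")
  case True then show ?thesis using S_1 by simp
next
  case False then show ?thesis using S_strict[of r 1] S_1 b1 assms by auto
qed

end



lemma deriv_funpow_zero: "(deriv ^^ n) (\<lambda>_. 0::real) = (\<lambda>_. 0)"
  by (induction n) auto

lemma deriv_funpow_const: "(deriv ^^ n) (\<lambda>_. c::real) x = (if n = 0 then c else 0)"
proof (cases n)
  case 0 then show ?thesis by simp
next
  case (Suc m)
  have "(deriv ^^ Suc m) (\<lambda>_. c::real) = (deriv ^^ m) (deriv (\<lambda>_. c))"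
    by (simp only: funpow_Suc_right o_apply)
  also have "deriv (\<lambda>_. c::real) = (\<lambda>_. 0)" by (simp add: fun_eq_iff)
  finally show ?thesis using Suc deriv_funpow_zero by simp
qed

lemma deriv_funpow_shift: "(deriv ^^ n) (\<lambda>y. y + c::real) x = (if n = 0 then x + c else if n = 1 then 1 else 0)"
proof (cases n)
  case 0 then show ?thesis by simp
next
  case (Suc m)
  have d: "deriv (\<lambda>y. y + c::real) = (\<lambda>_. 1)"
  proof
    fix y :: real
    have "((\<lambda>y. y + c) has_real_derivative 1) (at y)" by (auto intro!: derivative_eq_intros)
    then show "deriv (\<lambda>y. y + c) y = 1" by (rule DERIV_imp_deriv)
  qed
  have "(deriv ^^ Suc m) (\<lambda>y. y + c::real) = (deriv ^^ m) (deriv (\<lambda>y. y + c))"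
    by (simp only: funpow_Suc_right o_apply)
  then show ?thesis using Suc d deriv_funpow_const[of m 1 x] by simp
qed

lemma interior_std_cube: "interior (std_cube b) = {(if b then 0 else -1)<..<1}"
  by (simp add: std_cube_def)

lemma mbd_M: "mbd {0<..1::real} = {1}"
  by (auto simp: mbd_def)

context cs begin

definition psi :: "nat \<Rightarrow> real \<Rightarrow> real" where "psi k x = F (real k + x)"
definition chart :: "nat \<Rightarrow> bool \<times> (real \<Rightarrow> real)" where "chart k = (k = 0, psi k)"

lemma Qk: "y \<in> std_cube (k = 0) \<longleftrightarrow> (if k = 0 then 0 \<le> y \<and> y < 1 else -1 < y \<and> y < 1)"
  by (simp add: std_cube_def)

lemma Q_sum: "y \<in> std_cube (k = 0) \<Longrightarrow> 0 \<le> real k + y \<and> (k \<noteq> 0 \<longrightarrow> 0 < real k + y)"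
  unfolding Qk by (cases "k = 0") auto

lemma patch_char:
  "r \<in> patch (chart k) \<longleftrightarrow> r \<in> {0<..1} \<and> S r - real k \<in> std_cube (k = 0)"
proof
  assume "r \<in> patch (chart k)"
  then obtain y where y: "y \<in> std_cube (k = 0)" "r = F (real k + y)"
    unfolding patch_def chart_def psi_def by auto
  have s: "0 \<le> real k + y" using Q_sum[OF y(1)] by simp
  then have "r \<in> {0<..1}" using F_pos_range y(2) by simp
  moreover have "S r = real k + y" using F_props(2)[of "real k + y"] s S_b2 y(2) by simp
  ultimately show "r \<in> {0<..1} \<and> S r - real k \<in> std_cube (k = 0)" using y(1) by simp
next
  assume a: "r \<in> {0<..1} \<and> S r - real k \<in> std_cube (k = 0)"
  have "psi k (S r - real k) = r" unfolding psi_def using F_S[of r] a b1 by simp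
  then show "r \<in> patch (chart k)" unfolding patch_def chart_def using a by force
qed

lemma S_psi: "y \<in> std_cube (k = 0) \<Longrightarrow> S (psi k y) = real k + y"
  unfolding psi_def using Q_sum[of y k] F_props(2)[of "real k + y"] S_b2 by simp

lemma psi_in: "y \<in> std_cube (k = 0) \<Longrightarrow> psi k y \<in> {0<..1}"
  unfolding psi_def using Q_sum[of y k] F_pos_range by simp

lemma psi_inj: "inj_on (psi k) (std_cube (k = 0))"
proof (rule inj_onI)
  fix x y assume x: "x \<in> std_cube (k = 0)" and y: "y \<in> std_cube (k = 0)" and e: "psi k x = psi k y"
  have "S (psi k x) = S (psi k y)" using e by simp
  then show "x = y" using S_psi[OF x] S_psi[OF y] by simp
qed

lemma inv_psi: "y \<in> std_cube (k = 0) \<Longrightarrow> inv_into (std_cube (k = 0)) (psi k) (psi k y) = y"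
  by (rule inv_into_f_f[OF psi_inj])

lemma psi_patch: "patch (chart k) = psi k ` std_cube (k = 0)"
  unfolding patch_def chart_def by simp

lemma normalized: "normalized_chart {0<..1} (chart k)"
proof -
  let ?Q = "std_cube (k = 0)"
  let ?U = "psi k ` ?Q"
  have open1: "openin (top_of_set {0<..1}) ?U"
  proof -
    define W where "W = (if k = 0 then {..<1} else {-1<..<(1::real)})"
    have "continuous_on {0<..1} (\<lambda>r. S r - real k)"
      by (intro continuous_at_imp_continuous_on ballI continuous_intros S_cont) (use b1 in auto)
    then have "openin (top_of_set {0<..1}) ({0<..1} \<inter> (\<lambda>r. S r - real k) -` W)"
      by (rule continuous_openin_preimage_gen) (simp add: W_def)
    moreover have "{0<..1} \<inter> (\<lambda>r. S r - real k) -` W = ?U"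
    proof
      show "{0<..1} \<inter> (\<lambda>r. S r - real k) -` W \<subseteq> ?U"
      proof
        fix r assume r: "r \<in> {0<..1} \<inter> (\<lambda>r. S r - real k) -` W"
        have "0 \<le> S r" using S_nonneg r by blast
        then have "S r - real k \<in> ?Q" using r unfolding W_def Qk by (cases "k = 0") auto
        then have "r \<in> patch (chart k)" using patch_char r by blast
        then show "r \<in> ?U" unfolding psi_patch .
      qed
    next
      show "?U \<subseteq> {0<..1} \<inter> (\<lambda>r. S r - real k) -` W"
      proof
        fix r assume "r \<in> ?U"
        then have "r \<in> patch (chart k)" unfolding psi_patch .
        then have "r \<in> {0<..1}" "S r - real k \<in> ?Q" using patch_char by blast+
        then show "r \<in> {0<..1} \<inter> (\<lambda>r. S r - real k) -` W"
          unfolding W_def Qk by (cases "k = 0") auto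
      qed
    qed
    ultimately show ?thesis by simp
  qed
  have sm1: "smooth_on ?Q (psi k)"
    unfolding smooth_on_def
  proof (intro exI conjI)
    show "open {S b2 - real k<..}" by simp
    show "?Q \<subseteq> {S b2 - real k<..}" using Q_sum S_b2 by force
    show "\<forall>x\<in>?Q. psi k x = psi k x" by simp
    have "Cinf {S b2 - real k<..} (\<lambda>y. F (real k + y))"
      by (rule Cinf_shift[OF _ _ _ Cinf_F]) auto
    then show "\<forall>n. \<forall>x\<in>{S b2 - real k<..}. (deriv ^^ n) (psi k) differentiable at x"
      unfolding Cinf_def psi_def[abs_def] .
  qed
  have sm2: "smooth_on ?U (inv_into ?Q (psi k))"
    unfolding smooth_on_def
  proof (intro exI conjI)
    show "open {0<..<b}" by simp
    show "?U \<subseteq> {0<..<b}" using psi_in b1 by force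
    show "\<forall>x\<in>?U. S x - real k = inv_into ?Q (psi k) x"
      using inv_psi S_psi by auto
    have "Cinf {0<..<b} (\<lambda>x. S x - real k)"
      by (rule Cinf_diff2[OF _ Cinf_S Cinf_const]) auto
    then show "\<forall>n. \<forall>x\<in>{0<..<b}. (deriv ^^ n) (\<lambda>x. S x - real k) differentiable at x"
      unfolding Cinf_def .
  qed
  have one: "psi k y = 1 \<longleftrightarrow> k = 0 \<and> y = 0" if y: "y \<in> ?Q" for y
  proof
    assume "psi k y = 1"
    then have "S (psi k y) = 0" using S_1 by simp
    then have "real k + y = 0" using S_psi[OF y] by simp
    then show "k = 0 \<and> y = 0" using Q_sum[OF y] by auto
  next
    assume "k = 0 \<and> y = 0" then show "psi k y = 1" unfolding psi_def using F_0 by simp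
  qed
  have bd: "(k = 0) \<longleftrightarrow> ?U \<inter> mbd {0<..1} \<noteq> {}"
  proof
    assume k0: "k = 0"
    have "0 \<in> ?Q" using k0 by (simp add: std_cube_def)
    moreover have "psi k 0 = 1" unfolding psi_def using F_0 k0 by simp
    ultimately show "?U \<inter> mbd {0<..1} \<noteq> {}" unfolding mbd_M by force
  next
    assume "?U \<inter> mbd {0<..1} \<noteq> {}"
    then obtain y where "y \<in> ?Q" "psi k y = 1" unfolding mbd_M by auto
    then show "k = 0" using one by blast
  qed
  show ?thesis
    unfolding normalized_chart_def Let_def chart_def fst_conv snd_conv
    using open1 psi_inj sm1 sm2 bd one unfolding mbd_M by auto
qed

lemma psi_deriv:
  assumes y: "y \<in> {(if k = 0 then 0 else -1)<..<1}"
  shows "deriv (psi k) y = - h (psi k y)"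
proof -
  have s: "S b2 < real k + y" using y S_b2 by (cases "k = 0") auto
  have "((\<lambda>y. F (real k + y)) has_real_derivative - h (F (real k + y)) * 1) (at y)"
    by (rule DERIV_chain2[where f=F and g="\<lambda>y. real k + y" and x=y, OF F_DERIV[OF s]]) (auto intro!: derivative_eq_intros)
  then show ?thesis unfolding psi_def[abs_def] using DERIV_imp_deriv by fastforce
qed

lemma metric_one:
  assumes y: "y \<in> interior (std_cube (k = 0))"
  shows "1 / (R (psi k y))\<^sup>2 * (deriv (psi k) y)\<^sup>2 = 1"
proof -
  have y': "y \<in> {(if k = 0 then 0 else -1)<..<1}" using y by (simp add: interior_std_cube)
  have yq: "y \<in> std_cube (k = 0)" using y interior_subset by blast
  have pin: "psi k y \<in> {0<..1}" by (rule psi_in[OF yq])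
  have "R (psi k y) = h (psi k y)" using Rh pin by blast
  moreover have "h (psi k y) > 0" using hpos pin b1 by auto
  ultimately show ?thesis using psi_deriv[OF y'] by (simp add: power2_eq_square)
qed

lemma atlas_UR: "uniformly_regular {0<..1} (\<lambda>r. 1 / (R r)\<^sup>2)"
  unfolding uniformly_regular_def
proof (intro exI[of _ "range chart"] conjI)
  show "\<forall>\<kappa>\<in>range chart. normalized_chart {0<..1} \<kappa>" using normalized by auto
  show "\<exists>r>0. r < 1 \<and> {0<..1} \<subseteq> (\<Union>\<kappa>\<in>range chart. snd \<kappa> ` shrunk_cube r (fst \<kappa>))"
  proof (intro exI[of _ "3/4"] conjI subsetI)
    fix x :: real assume x: "x \<in> {0<..1}"
    define s where "s = S x"
    have s0: "0 \<le> s" unfolding s_def using S_nonneg x by blast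
    have Fs: "F s = x" unfolding s_def using F_S[of x] x b1 by auto
    show "x \<in> (\<Union>\<kappa>\<in>range chart. snd \<kappa> ` shrunk_cube (3/4) (fst \<kappa>))"
    proof (cases "s < 3/4")
      case True
      have "x = psi 0 s" unfolding psi_def using Fs by simp
      moreover have "s \<in> shrunk_cube (3/4) True" using True s0 by (simp add: shrunk_cube_def)
      ultimately show ?thesis unfolding chart_def by force
    next
      case False
      define k where "k = nat \<lfloor>s + 1/2\<rfloor>"
      have fl: "real_of_int \<lfloor>s + 1/2\<rfloor> \<le> s + 1/2" "s + 1/2 < real_of_int \<lfloor>s + 1/2\<rfloor> + 1"
        by linarith+
      have fl1: "1 \<le> \<lfloor>s + 1/2\<rfloor>" using False by linarith
      have kr: "real k = real_of_int \<lfloor>s + 1/2\<rfloor>" unfolding k_def using fl1 by simp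
      have k0: "k \<noteq> 0" unfolding k_def using fl1 by simp
      have "x = psi k (s - real k)" unfolding psi_def using Fs by simp
      moreover have "s - real k \<in> shrunk_cube (3/4) False"
      proof -
        have "-(3/4) < s - real k" "s - real k < 3/4" using fl kr by linarith+
        then show ?thesis by (simp add: shrunk_cube_def)
      qed
      ultimately show ?thesis unfolding chart_def using k0 by force
    qed
  qed auto
  show "\<exists>N. \<forall>x\<in>{0<..1}. finite {\<kappa> \<in> range chart. x \<in> patch \<kappa>} \<and> card {\<kappa> \<in> range chart. x \<in> patch \<kappa>} \<le> N"
  proof (intro exI[of _ 2] ballI)
    fix x :: real assume x: "x \<in> {0<..1}"
    define s where "s = S x"
    have s0: "0 \<le> s" unfolding s_def using S_nonneg x by blast
    have sub: "{\<kappa> \<in> range chart. x \<in> patch \<kappa>} \<subseteq> chart ` {nat \<lfloor>s\<rfloor>, nat \<lfloor>s\<rfloor> + 1}"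
    proof
      fix \<kappa> assume "\<kappa> \<in> {\<kappa> \<in> range chart. x \<in> patch \<kappa>}"
      then obtain k where k: "\<kappa> = chart k" "x \<in> patch (chart k)" by auto
      then have "s - real k \<in> std_cube (k = 0)" using patch_char s_def by blast
      then have a: "s - 1 < real k" "real k < s + 1" unfolding Qk by (cases "k = 0", auto)+
      have "real_of_int \<lfloor>s\<rfloor> \<le> s" "s < real_of_int \<lfloor>s\<rfloor> + 1" by linarith+
      then have "int k = \<lfloor>s\<rfloor> \<or> int k = \<lfloor>s\<rfloor> + 1" using a by linarith
      then have "k = nat \<lfloor>s\<rfloor> \<or> k = nat \<lfloor>s\<rfloor> + 1" using s0 by auto
      then show "\<kappa> \<in> chart ` {nat \<lfloor>s\<rfloor>, nat \<lfloor>s\<rfloor> + 1}" using k by auto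
    qed
    have fin: "finite (chart ` {nat \<lfloor>s\<rfloor>, nat \<lfloor>s\<rfloor> + 1})" by simp
    have "card (chart ` {nat \<lfloor>s\<rfloor>, nat \<lfloor>s\<rfloor> + 1}) \<le> 2"
      by (rule order_trans[OF card_image_le]) (auto simp: card_insert_if)
    then show "finite {\<kappa> \<in> range chart. x \<in> patch \<kappa>} \<and> card {\<kappa> \<in> range chart. x \<in> patch \<kappa>} \<le> 2"
      using finite_subset[OF sub fin] card_mono[OF fin sub] by linarith
  qed
  show "\<forall>n. \<exists>C. \<forall>\<kappa>\<in>range chart. \<forall>\<eta>\<in>range chart.
           \<forall>x\<in>interior {y \<in> std_cube (fst \<kappa>). snd \<kappa> y \<in> patch \<eta>}.
             \<bar>(deriv ^^ n) (inv_into (std_cube (fst \<eta>)) (snd \<eta>) \<circ> snd \<kappa>) x\<bar> \<le> C"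
  proof (intro allI exI[of _ 1] ballI)
    fix n \<kappa> \<eta> x
    assume "\<kappa> \<in> range chart" "\<eta> \<in> range chart"
    then obtain k j where kj: "\<kappa> = chart k" "\<eta> = chart j" by auto
    assume "x \<in> interior {y \<in> std_cube (fst \<kappa>). snd \<kappa> y \<in> patch \<eta>}"
    then have x: "x \<in> interior {y \<in> std_cube (k = 0). psi k y \<in> patch (chart j)}"
      unfolding kj chart_def by simp
    let ?W = "interior {y \<in> std_cube (k = 0). psi k y \<in> patch (chart j)}"
    have eq: "(inv_into (std_cube (j = 0)) (psi j) \<circ> psi k) y = y + (real k - real j)
              \<and> y + (real k - real j) \<in> std_cube (j = 0)"
      if y: "y \<in> {y \<in> std_cube (k = 0). psi k y \<in> patch (chart j)}" for y
    proof -
      have yq: "y \<in> std_cube (k = 0)" and p: "psi k y \<in> patch (chart j)" using y by auto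
      have Sp: "S (psi k y) = real k + y" by (rule S_psi[OF yq])
      have z: "y + (real k - real j) \<in> std_cube (j = 0)" using p patch_char Sp
        by (metis add.commute add_diff_eq)
      have "psi j (y + (real k - real j)) = psi k y" unfolding psi_def
        by (simp add: algebra_simps)
      then have "inv_into (std_cube (j = 0)) (psi j) (psi k y) = y + (real k - real j)"
        using inv_psi[OF z] by simp
      then show ?thesis using z by simp
    qed
    have loc: "\<forall>y\<in>?W. (inv_into (std_cube (j = 0)) (psi j) \<circ> psi k) y = y + (real k - real j)"
      using eq interior_subset by blast
    have "(deriv ^^ n) (inv_into (std_cube (j = 0)) (psi j) \<circ> psi k) x
        = (deriv ^^ n) (\<lambda>y. y + (real k - real j)) x"
      using funpow_local[OF open_interior loc] x by blast
    moreover have "\<bar>x + (real k - real j)\<bar> \<le> 1"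
    proof -
      have "x + (real k - real j) \<in> std_cube (j = 0)" using eq x interior_subset by blast
      then show ?thesis unfolding Qk by (cases "j = 0") auto
    qed
    ultimately show "\<bar>(deriv ^^ n) (inv_into (std_cube (fst \<eta>)) (snd \<eta>) \<circ> snd \<kappa>) x\<bar> \<le> 1"
      unfolding kj chart_def fst_conv snd_conv deriv_funpow_shift by auto
  qed
  show "\<exists>c\<ge>1. \<forall>\<kappa>\<in>range chart. \<forall>x\<in>interior (std_cube (fst \<kappa>)).
          1 / c \<le> 1 / (R (snd \<kappa> x))\<^sup>2 * (deriv (snd \<kappa>) x)\<^sup>2 \<and>
          1 / (R (snd \<kappa> x))\<^sup>2 * (deriv (snd \<kappa>) x)\<^sup>2 \<le> c"
  proof (intro exI[of _ 1] conjI ballI)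
    fix \<kappa> x assume "\<kappa> \<in> range chart" and x: "x \<in> interior (std_cube (fst \<kappa>))"
    then obtain k where k: "\<kappa> = chart k" by auto
    have x': "x \<in> interior (std_cube (k = 0))" using x unfolding k chart_def by simp
    have e: "1 / (R (snd \<kappa> x))\<^sup>2 * (deriv (snd \<kappa>) x)\<^sup>2 = 1"
      unfolding k chart_def snd_conv by (rule metric_one[OF x'])
    show "1 / 1 \<le> 1 / (R (snd \<kappa> x))\<^sup>2 * (deriv (snd \<kappa>) x)\<^sup>2" unfolding e by simp
    show "1 / (R (snd \<kappa> x))\<^sup>2 * (deriv (snd \<kappa>) x)\<^sup>2 \<le> 1" unfolding e by simp
  qed simp
  show "\<forall>n. \<exists>C. \<forall>\<kappa>\<in>range chart. \<forall>x\<in>interior (std_cube (fst \<kappa>)).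
          \<bar>(deriv ^^ n) (\<lambda>y. 1 / (R (snd \<kappa> y))\<^sup>2 * (deriv (snd \<kappa>) y)\<^sup>2) x\<bar> \<le> C"
  proof (intro allI exI[of _ 1] ballI)
    fix n \<kappa> x assume "\<kappa> \<in> range chart" and x: "x \<in> interior (std_cube (fst \<kappa>))"
    then obtain k where k: "\<kappa> = chart k" by auto
    have x': "x \<in> interior (std_cube (k = 0))" using x unfolding k chart_def by simp
    have loc: "\<forall>y\<in>interior (std_cube (k = 0)). 1 / (R (psi k y))\<^sup>2 * (deriv (psi k) y)\<^sup>2 = 1"
      using metric_one by blast
    have "(deriv ^^ n) (\<lambda>y. 1 / (R (psi k y))\<^sup>2 * (deriv (psi k) y)\<^sup>2) x = (deriv ^^ n) (\<lambda>_. 1) x"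
      using funpow_local[OF open_interior loc] x' by blast
    then show "\<bar>(deriv ^^ n) (\<lambda>y. 1 / (R (snd \<kappa> y))\<^sup>2 * (deriv (snd \<kappa>) y)\<^sup>2) x\<bar> \<le> 1"
      unfolding k chart_def snd_conv deriv_funpow_const by simp
  qed
qed

end



theorem proposition8p2:
  fixes R :: "real \<Rightarrow> real"
  assumes "cusp_characteristic R"
  shows "uniformly_regular {0<..1} (\<lambda>r. 1 / (R r)\<^sup>2)"
proof -
  from assms have sm: "smooth_on {0<..1} R" and Rpos: "\<forall>t\<in>{0<..1}. 0 < R t \<and> R t \<le> 1"
    and inf: "set_nn_integral lborel {0<..1} (\<lambda>t. ennreal (1 / R t)) = \<infinity>"
    unfolding cusp_characteristic_def by auto
  from sm obtain T0 h where T0: "open T0" "{0<..1} \<subseteq> T0" and hR: "\<forall>x\<in>{0<..1}. h x = R x"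
    and hd: "\<forall>k. \<forall>x\<in>T0. (deriv ^^ k) h differentiable (at x)"
    unfolding smooth_on_def by blast
  have hC0: "Cinf T0 h" unfolding Cinf_def using hd by blast
  have one: "(1::real) \<in> T0" using T0 by auto
  obtain e1 where e1: "e1 > 0" "ball 1 e1 \<subseteq> T0" using T0(1) one openE by blast
  have "isCont h 1" by (rule differentiable_imp_continuous_within, rule Cinf_diff[OF hC0 one])
  then have "(h \<longlongrightarrow> h 1) (at 1)" by (simp add: isCont_def)
  moreover have h1: "0 < h 1" using hR Rpos by auto
  ultimately have "eventually (\<lambda>y. 0 < h y) (at 1)" by (rule order_tendstoD(1))
  then obtain e2 where e2: "e2 > 0" "\<forall>y. y \<noteq> 1 \<and> dist y 1 < e2 \<longrightarrow> 0 < h y"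
    unfolding eventually_at by auto
  define b where "b = 1 + min e1 e2 / 2"
  have b1: "1 < b" unfolding b_def using e1 e2 by auto
  have sub: "{0<..<b} \<subseteq> T0" and hpos: "\<forall>x\<in>{0<..<b}. 0 < h x"
  proof -
    have "y \<in> T0 \<and> 0 < h y" if y: "y \<in> {0<..<b}" for y
    proof (cases "y \<le> 1")
      case True
      then have "y \<in> {0<..1}" using y by auto
      then show ?thesis using T0 hR Rpos by auto
    next
      case False
      then have "dist y 1 < e1" "dist y 1 < e2" "y \<noteq> 1" using y unfolding b_def dist_real_def by auto
      then show ?thesis using e1 e2 by (auto simp: dist_commute)
    qed
    then show "{0<..<b} \<subseteq> T0" "\<forall>x\<in>{0<..<b}. 0 < h x" by auto
  qed
  have hC: "Cinf {0<..<b} h" using hC0 sub unfolding Cinf_def by blast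
  interpret cs R h b
    by unfold_locales (use b1 hC hpos hR inf in auto)
  show ?thesis by (rule atlas_UR)
qed


end
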